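(* Let $G$ be a belt with partition $Q_1,\dots,Q_5,R_2,R_3$. Then: (a) for each $j\in\{2,3\}$, any two non-adjacent vertices of $R_j$ have no common neighbor in $Q_{5-j}$; (b) there are no edges between $R_2$ and $R_3$; (c) for each $j\in\{2,3\}$, every vertex of $Q_j$ that has a neighbor in $R_{5-j}$ is complete to $Q_{5-j}$; (d) $G[R_2]$ and $G[R_3]$ are $(P_4,2P_3)$-free.
   Context: A belt is a $(P_6,C_4,C_6)$-free graph whose vertex set is partitioned into seven sets $Q_1,\dots,Q_5,R_2,R_3$ such that: $Q_1,\dots,Q_5$ are non-empty cliques; $Q_1$ is complete to $Q_2\cup R_2\cup Q_5$ and $Q_4$ is complete to $Q_3\cup R_3\cup Q_5$; $Q_1$ is anticomplete to $Q_3\cup R_3\cup Q_4$, $Q_4$ is anticomplete to $Q_2\cup R_2\cup Q_1$, $Q_5$ is anticomplete to $Q_2\cup R_2\cup Q_3\cup R_3$; for each $j\in\{2,3\}$, $Q_j$ is complete to $R_j$, every vertex of $Q_j\cup R_j$ has a neighbor in $Q_{5-j}\cup R_{5-j}$, and no vertex of $R_j$ is adjacent to all other vertices of $R_j$. Complete/anticomplete: all edges / no edges between the sets. $2P_3$ is the disjoint union of two copies of $P_3$. *)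

theory Defs
  imports Main
begin

text \<open>A finite simple graph: finite vertex set V and a symmetric irreflexive
adjacency relation E (only its restriction to V matters).\<close>
definition graph :: "'a set \<Rightarrow> ('a \<Rightarrow> 'a \<Rightarrow> bool) \<Rightarrow> bool" where
  "graph V E \<longleftrightarrow> finite V \<and> (\<forall>x y. E x y \<longrightarrow> E y x) \<and> (\<forall>x. \<not> E x x)"

definition has_induced :: "'a set \<Rightarrow> ('a \<Rightarrow> 'a \<Rightarrow> bool) \<Rightarrow> nat \<Rightarrow> (nat \<Rightarrow> nat \<Rightarrow> bool) \<Rightarrow> bool" where
  "has_induced V E n HE \<longleftrightarrow> (\<exists>f. (\<forall>i<n. f i \<in> V) \<and> inj_on f {..<n} \<and>
      (\<forall>i<n. \<forall>j<n. E (f i) (f j) \<longleftrightarrow> HE i j))"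

definition path_edges :: "nat \<Rightarrow> nat \<Rightarrow> bool" where
  "path_edges i j \<longleftrightarrow> i + 1 = j \<or> j + 1 = i"

definition P_free :: "nat \<Rightarrow> 'a set \<Rightarrow> ('a \<Rightarrow> 'a \<Rightarrow> bool) \<Rightarrow> bool" where
  "P_free n V E \<longleftrightarrow> \<not> has_induced V E n path_edges"

definition cycle_edges :: "nat \<Rightarrow> nat \<Rightarrow> nat \<Rightarrow> bool" where
  "cycle_edges n i j \<longleftrightarrow> path_edges i j \<or> (i = 0 \<and> j = n - 1) \<or> (j = 0 \<and> i = n - 1)"

definition C_free :: "nat \<Rightarrow> 'a set \<Rightarrow> ('a \<Rightarrow> 'a \<Rightarrow> bool) \<Rightarrow> bool" where
  "C_free n V E \<longleftrightarrow> \<not> has_induced V E n (cycle_edges n)"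

definition twoP3_edges :: "nat \<Rightarrow> nat \<Rightarrow> bool" where
  "twoP3_edges i j \<longleftrightarrow> (path_edges i j \<and> i \<le> 2 \<and> j \<le> 2) \<or>
                        (path_edges i j \<and> 3 \<le> i \<and> 3 \<le> j)"

definition twoP3_free :: "'a set \<Rightarrow> ('a \<Rightarrow> 'a \<Rightarrow> bool) \<Rightarrow> bool" where
  "twoP3_free V E \<longleftrightarrow> \<not> has_induced V E 6 twoP3_edges"

definition clique :: "('a \<Rightarrow> 'a \<Rightarrow> bool) \<Rightarrow> 'a set \<Rightarrow> bool" where
  "clique E Q \<longleftrightarrow> (\<forall>x\<in>Q. \<forall>y\<in>Q. x \<noteq> y \<longrightarrow> E x y)"

definition complete :: "('a \<Rightarrow> 'a \<Rightarrow> bool) \<Rightarrow> 'a set \<Rightarrow> 'a set \<Rightarrow> bool" where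
  "complete E A B \<longleftrightarrow> (\<forall>x\<in>A. \<forall>y\<in>B. E x y)"

definition anticomplete :: "('a \<Rightarrow> 'a \<Rightarrow> bool) \<Rightarrow> 'a set \<Rightarrow> 'a set \<Rightarrow> bool" where
  "anticomplete E A B \<longleftrightarrow> (\<forall>x\<in>A. \<forall>y\<in>B. \<not> E x y)"

definition belt :: "'a set \<Rightarrow> ('a \<Rightarrow> 'a \<Rightarrow> bool) \<Rightarrow> 'a set \<Rightarrow> 'a set \<Rightarrow> 'a set \<Rightarrow> 'a set \<Rightarrow> 'a set
    \<Rightarrow> 'a set \<Rightarrow> 'a set \<Rightarrow> bool" where
  "belt V E Q1 Q2 Q3 Q4 Q5 R2 R3 \<longleftrightarrow>
     graph V E \<and> P_free 6 V E \<and> C_free 4 V E \<and> C_free 6 V E \<and>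
     \<comment> \<open>partition of V into seven sets\<close>
     Q1 \<union> Q2 \<union> Q3 \<union> Q4 \<union> Q5 \<union> R2 \<union> R3 = V \<and>
     Q1 \<inter> Q2 = {} \<and> Q1 \<inter> Q3 = {} \<and> Q1 \<inter> Q4 = {} \<and> Q1 \<inter> Q5 = {} \<and> Q1 \<inter> R2 = {} \<and> Q1 \<inter> R3 = {} \<and>
     Q2 \<inter> Q3 = {} \<and> Q2 \<inter> Q4 = {} \<and> Q2 \<inter> Q5 = {} \<and> Q2 \<inter> R2 = {} \<and> Q2 \<inter> R3 = {} \<and>
     Q3 \<inter> Q4 = {} \<and> Q3 \<inter> Q5 = {} \<and> Q3 \<inter> R2 = {} \<and> Q3 \<inter> R3 = {} \<and>
     Q4 \<inter> Q5 = {} \<and> Q4 \<inter> R2 = {} \<and> Q4 \<inter> R3 = {} \<and>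
     Q5 \<inter> R2 = {} \<and> Q5 \<inter> R3 = {} \<and>
     R2 \<inter> R3 = {} \<and>
     \<comment> \<open>Q1..Q5 non-empty cliques\<close>
     Q1 \<noteq> {} \<and> Q2 \<noteq> {} \<and> Q3 \<noteq> {} \<and> Q4 \<noteq> {} \<and> Q5 \<noteq> {} \<and>
     clique E Q1 \<and> clique E Q2 \<and> clique E Q3 \<and> clique E Q4 \<and> clique E Q5 \<and>
     complete E Q1 (Q2 \<union> R2 \<union> Q5) \<and> complete E Q4 (Q3 \<union> R3 \<union> Q5) \<and>
     anticomplete E Q1 (Q3 \<union> R3 \<union> Q4) \<and> anticomplete E Q4 (Q2 \<union> R2 \<union> Q1) \<and>
     anticomplete E Q5 (Q2 \<union> R2 \<union> Q3 \<union> R3) \<and>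
     complete E Q2 R2 \<and> complete E Q3 R3 \<and>
     (\<forall>v\<in>Q2 \<union> R2. \<exists>u\<in>Q3 \<union> R3. E v u) \<and>
     (\<forall>v\<in>Q3 \<union> R3. \<exists>u\<in>Q2 \<union> R2. E v u) \<and>
     (\<forall>v\<in>R2. \<not> (\<forall>u\<in>R2. u \<noteq> v \<longrightarrow> E v u)) \<and>
     (\<forall>v\<in>R3. \<not> (\<forall>u\<in>R3. u \<noteq> v \<longrightarrow> E v u))"

end

theory Submission
  imports Defs
begin


lemma all6: "(\<forall>i<(6::nat). P i) \<longleftrightarrow> P 0 \<and> P 1 \<and> P 2 \<and> P 3 \<and> P 4 \<and> P 5"
proof -
  have "{..<(6::nat)} = {0,1,2,3,4,5}" by auto
  then show ?thesis by (metis (no_types, lifting) insert_iff lessThan_iff empty_iff)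
qed
lemma all4: "(\<forall>i<(4::nat). P i) \<longleftrightarrow> P 0 \<and> P 1 \<and> P 2 \<and> P 3"
proof -
  have "{..<(4::nat)} = {0,1,2,3}" by auto
  then show ?thesis by (metis (no_types, lifting) insert_iff lessThan_iff empty_iff)
qed

lemma injn: "distinct xs \<Longrightarrow> inj_on (\<lambda>i. xs ! i) {..<length xs}"
  by (auto simp: inj_on_def distinct_conv_nth)
lemma inj6: "distinct [a,b,c,d,e,f] \<Longrightarrow> inj_on (\<lambda>i. [a,b,c,d,e,f] ! i) {..<6}"
  using injn[of "[a,b,c,d,e,f]"] by (simp add: numeral_eq_Suc)
lemma inj4: "distinct [a,b,c,d] \<Longrightarrow> inj_on (\<lambda>i. [a,b,c,d] ! i) {..<4}"
  using injn[of "[a,b,c,d]"] by (simp add: numeral_eq_Suc)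

lemma noP6:
  assumes "P_free 6 V E" "\<And>x y. E x y \<Longrightarrow> E y x" "\<And>x. \<not> E x x"
    "a \<in> V" "b \<in> V" "c \<in> V" "d \<in> V" "e \<in> V" "f \<in> V" "distinct [a,b,c,d,e,f]"
    "E a b" "E b c" "E c d" "E d e" "E e f"
    "\<not> E a c" "\<not> E a d" "\<not> E a e" "\<not> E a f" "\<not> E b d" "\<not> E b e" "\<not> E b f"
    "\<not> E c e" "\<not> E c f" "\<not> E d f"
  shows False
proof -
  have nsym: "\<And>x y. \<not> E x y \<Longrightarrow> \<not> E y x" using assms(2) by blast
  have "has_induced V E 6 path_edges"
    unfolding has_induced_def
    apply (rule exI[of _ "\<lambda>i. [a,b,c,d,e,f] ! i"])
    using assms(4-9,11-25) assms(2)[OF assms(11)] assms(2)[OF assms(12)] assms(2)[OF assms(13)] assms(2)[OF assms(14)] assms(2)[OF assms(15)]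
      assms(3)[of a] assms(3)[of b] assms(3)[of c] assms(3)[of d] assms(3)[of e] assms(3)[of f]
      inj6[OF assms(10)] assms(16-25)[THEN nsym]
    by (simp add: all6 path_edges_def)
  thus False using assms(1) unfolding P_free_def by blast
qed

lemma noC6:
  assumes "C_free 6 V E" "\<And>x y. E x y \<Longrightarrow> E y x" "\<And>x. \<not> E x x"
    "a \<in> V" "b \<in> V" "c \<in> V" "d \<in> V" "e \<in> V" "f \<in> V" "distinct [a,b,c,d,e,f]"
    "E a b" "E b c" "E c d" "E d e" "E e f" "E f a"
    "\<not> E a c" "\<not> E a d" "\<not> E a e" "\<not> E b d" "\<not> E b e" "\<not> E b f"
    "\<not> E c e" "\<not> E c f" "\<not> E d f"
  shows False
proof -
  have nsym: "\<And>x y. \<not> E x y \<Longrightarrow> \<not> E y x" using assms(2) by blast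
  have "has_induced V E 6 (cycle_edges 6)"
    unfolding has_induced_def
    apply (rule exI[of _ "\<lambda>i. [a,b,c,d,e,f] ! i"])
    using assms(4-9,11-25) assms(2)[OF assms(11)] assms(2)[OF assms(12)] assms(2)[OF assms(13)] assms(2)[OF assms(14)] assms(2)[OF assms(15)] assms(2)[OF assms(16)]
      assms(3)[of a] assms(3)[of b] assms(3)[of c] assms(3)[of d] assms(3)[of e] assms(3)[of f]
      inj6[OF assms(10)] assms(17-25)[THEN nsym]
    by (simp add: all6 cycle_edges_def path_edges_def)
  thus False using assms(1) unfolding C_free_def by blast
qed

lemma noC4:
  assumes "C_free 4 V E" "\<And>x y. E x y \<Longrightarrow> E y x" "\<And>x. \<not> E x x"
    "a \<in> V" "b \<in> V" "c \<in> V" "d \<in> V" "distinct [a,b,c,d]"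
    "E a b" "E b c" "E c d" "E d a" "\<not> E a c" "\<not> E b d"
  shows False
proof -
  have nsym: "\<And>x y. \<not> E x y \<Longrightarrow> \<not> E y x" using assms(2) by blast
  have "has_induced V E 4 (cycle_edges 4)"
    unfolding has_induced_def
    apply (rule exI[of _ "\<lambda>i. [a,b,c,d] ! i"])
    using assms(4-7,9-14) assms(2)[OF assms(9)] assms(2)[OF assms(10)] assms(2)[OF assms(11)] assms(2)[OF assms(12)]
      assms(3)[of a] assms(3)[of b] assms(3)[of c] assms(3)[of d]
      inj4[OF assms(8)] assms(13-14)[THEN nsym]
    by (simp add: all4 cycle_edges_def path_edges_def)
  thus False using assms(1) unfolding C_free_def by blast
qed


lemma getP4:
  assumes "\<not> P_free 4 W E"
  obtains a b c d where "a \<in> W" "b \<in> W" "c \<in> W" "d \<in> W" "distinct [a,b,c,d]"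
    "E a b" "E b c" "E c d" "\<not> E a c" "\<not> E a d" "\<not> E b d"
proof -
  obtain f where f: "\<forall>i<4. f i \<in> W" "inj_on f {..<4}" "\<forall>i<4. \<forall>j<4. E (f i) (f j) \<longleftrightarrow> path_edges i j"
    using assms unfolding P_free_def has_induced_def by blast
  have ij: "f i \<noteq> f j" if "i < 4" "j < 4" "i \<noteq> j" for i j
    using inj_onD[OF f(2)] that by blast
  have e: "E (f i) (f j) \<longleftrightarrow> path_edges i j" if "i < 4" "j < 4" for i j
    using f(3) that by blast
  have m: "f i \<in> W" if "i < 4" for i using f(1) that by blast
  show ?thesis
    apply (rule that[of "f 0" "f 1" "f 2" "f 3"])
    by (simp_all add: m e ij path_edges_def)
qed
lemma get2P3:
  assumes "\<not> twoP3_free W E"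
  obtains a b c d e g where "a \<in> W" "b \<in> W" "c \<in> W" "d \<in> W" "e \<in> W" "g \<in> W"
    "distinct [a,b,c,d,e,g]"
    "E a b" "E b c" "E d e" "E e g" "\<not> E a c" "\<not> E d g"
    "\<not> E a d" "\<not> E a e" "\<not> E a g" "\<not> E b d" "\<not> E b e" "\<not> E b g"
    "\<not> E c d" "\<not> E c e" "\<not> E c g"
proof -
  obtain f where f: "\<forall>i<6. f i \<in> W" "inj_on f {..<6}" "\<forall>i<6. \<forall>j<6. E (f i) (f j) \<longleftrightarrow> twoP3_edges i j"
    using assms unfolding twoP3_free_def has_induced_def by blast
  have ij: "f i \<noteq> f j" if "i < 6" "j < 6" "i \<noteq> j" for i j
    using inj_onD[OF f(2)] that by blast
  have e: "E (f i) (f j) \<longleftrightarrow> twoP3_edges i j" if "i < 6" "j < 6" for i j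
    using f(3) that by blast
  have m: "f i \<in> W" if "i < 6" for i using f(1) that by blast
  show ?thesis
    apply (rule that[of "f 0" "f 1" "f 2" "f 3" "f 4" "f 5"])
    by (simp_all add: m e ij twoP3_edges_def path_edges_def)
qed
lemma disjD: "A \<inter> B = {} \<Longrightarrow> x \<in> A \<Longrightarrow> y \<in> B \<Longrightarrow> x \<noteq> y"
  by blast

theorem theorem4p1:
  assumes "belt V E Q1 Q2 Q3 Q4 Q5 R2 R3"
  shows "(\<forall>u\<in>R2. \<forall>v\<in>R2. u \<noteq> v \<and> \<not> E u v \<longrightarrow> \<not> (\<exists>w\<in>Q3. E u w \<and> E v w))
       \<and> (\<forall>u\<in>R3. \<forall>v\<in>R3. u \<noteq> v \<and> \<not> E u v \<longrightarrow> \<not> (\<exists>w\<in>Q2. E u w \<and> E v w))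
       \<and> (\<forall>u\<in>R2. \<forall>v\<in>R3. \<not> E u v)
       \<and> (\<forall>v\<in>Q2. (\<exists>r\<in>R3. E v r) \<longrightarrow> (\<forall>q\<in>Q3. E v q))
       \<and> (\<forall>v\<in>Q3. (\<exists>r\<in>R2. E v r) \<longrightarrow> (\<forall>q\<in>Q2. E v q))
       \<and> P_free 4 R2 E \<and> twoP3_free R2 E
       \<and> P_free 4 R3 E \<and> twoP3_free R3 E"
proof -
  note B = assms[unfolded belt_def]
  have gr: "graph V E" and p6: "P_free 6 V E" and c4: "C_free 4 V E" and c6: "C_free 6 V E"
    and U: "Q1 \<union> Q2 \<union> Q3 \<union> Q4 \<union> Q5 \<union> R2 \<union> R3 = V"
    using B by - (elim conjE, assumption)+
  have sym: "\<And>x y. E x y \<Longrightarrow> E y x" and irr: "\<And>x. \<not> E x x"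
    using gr unfolding graph_def by blast+
  have V: "Q1 \<subseteq> V" "Q2 \<subseteq> V" "Q3 \<subseteq> V" "Q4 \<subseteq> V" "Q5 \<subseteq> V" "R2 \<subseteq> V" "R3 \<subseteq> V"
    using U by blast+
  have D: "Q1 \<inter> Q2 = {}" "Q1 \<inter> Q3 = {}" "Q1 \<inter> Q4 = {}" "Q1 \<inter> Q5 = {}" "Q1 \<inter> R2 = {}" "Q1 \<inter> R3 = {}"
     "Q2 \<inter> Q3 = {}" "Q2 \<inter> Q4 = {}" "Q2 \<inter> Q5 = {}" "Q2 \<inter> R2 = {}" "Q2 \<inter> R3 = {}"
     "Q3 \<inter> Q4 = {}" "Q3 \<inter> Q5 = {}" "Q3 \<inter> R2 = {}" "Q3 \<inter> R3 = {}"
     "Q4 \<inter> Q5 = {}" "Q4 \<inter> R2 = {}" "Q4 \<inter> R3 = {}"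
     "Q5 \<inter> R2 = {}" "Q5 \<inter> R3 = {}" "R2 \<inter> R3 = {}" using B by - (elim conjE, assumption)+
  have ne: "Q1 \<noteq> {}" "Q4 \<noteq> {}" "Q5 \<noteq> {}" using B by - (elim conjE, assumption)+
  obtain q1 q4 q5 where q: "q1 \<in> Q1" "q4 \<in> Q4" "q5 \<in> Q5" using ne by blast
  have cls: "clique E Q2" "clique E Q3" using B by - (elim conjE, assumption)+
  have cl2: "\<And>x y. x \<in> Q2 \<Longrightarrow> y \<in> Q2 \<Longrightarrow> x \<noteq> y \<Longrightarrow> E x y"
   and cl3: "\<And>x y. x \<in> Q3 \<Longrightarrow> y \<in> Q3 \<Longrightarrow> x \<noteq> y \<Longrightarrow> E x y"
    using cls unfolding clique_def by blast+
  have cs: "complete E Q1 (Q2 \<union> R2 \<union> Q5)" "complete E Q4 (Q3 \<union> R3 \<union> Q5)"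
     "complete E Q2 R2" "complete E Q3 R3" using B by - (elim conjE, assumption)+
  have acs: "anticomplete E Q1 (Q3 \<union> R3 \<union> Q4)" "anticomplete E Q4 (Q2 \<union> R2 \<union> Q1)"
     "anticomplete E Q5 (Q2 \<union> R2 \<union> Q3 \<union> R3)" using B by - (elim conjE, assumption)+
  have K: "\<And>x y. x \<in> Q1 \<Longrightarrow> y \<in> Q2 \<Longrightarrow> E x y"
     "\<And>x y. x \<in> Q1 \<Longrightarrow> y \<in> R2 \<Longrightarrow> E x y"
     "\<And>x y. x \<in> Q1 \<Longrightarrow> y \<in> Q5 \<Longrightarrow> E x y"
     "\<And>x y. x \<in> Q4 \<Longrightarrow> y \<in> Q3 \<Longrightarrow> E x y"
     "\<And>x y. x \<in> Q4 \<Longrightarrow> y \<in> R3 \<Longrightarrow> E x y"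
     "\<And>x y. x \<in> Q4 \<Longrightarrow> y \<in> Q5 \<Longrightarrow> E x y"
     "\<And>x y. x \<in> Q2 \<Longrightarrow> y \<in> R2 \<Longrightarrow> E x y"
     "\<And>x y. x \<in> Q3 \<Longrightarrow> y \<in> R3 \<Longrightarrow> E x y"
    using cs unfolding complete_def by blast+
  have K': "\<And>x y. x \<in> Q1 \<Longrightarrow> y \<in> Q2 \<Longrightarrow> E y x"
     "\<And>x y. x \<in> Q1 \<Longrightarrow> y \<in> R2 \<Longrightarrow> E y x"
     "\<And>x y. x \<in> Q1 \<Longrightarrow> y \<in> Q5 \<Longrightarrow> E y x"
     "\<And>x y. x \<in> Q4 \<Longrightarrow> y \<in> Q3 \<Longrightarrow> E y x"
     "\<And>x y. x \<in> Q4 \<Longrightarrow> y \<in> R3 \<Longrightarrow> E y x"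
     "\<And>x y. x \<in> Q4 \<Longrightarrow> y \<in> Q5 \<Longrightarrow> E y x"
     "\<And>x y. x \<in> Q2 \<Longrightarrow> y \<in> R2 \<Longrightarrow> E y x"
     "\<And>x y. x \<in> Q3 \<Longrightarrow> y \<in> R3 \<Longrightarrow> E y x"
    using K sym by blast+
  have A: "\<And>x y. x \<in> Q1 \<Longrightarrow> y \<in> Q3 \<Longrightarrow> \<not> E x y"
     "\<And>x y. x \<in> Q1 \<Longrightarrow> y \<in> R3 \<Longrightarrow> \<not> E x y"
     "\<And>x y. x \<in> Q1 \<Longrightarrow> y \<in> Q4 \<Longrightarrow> \<not> E x y"
     "\<And>x y. x \<in> Q4 \<Longrightarrow> y \<in> Q2 \<Longrightarrow> \<not> E x y"
     "\<And>x y. x \<in> Q4 \<Longrightarrow> y \<in> R2 \<Longrightarrow> \<not> E x y"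
     "\<And>x y. x \<in> Q5 \<Longrightarrow> y \<in> Q2 \<Longrightarrow> \<not> E x y"
     "\<And>x y. x \<in> Q5 \<Longrightarrow> y \<in> R2 \<Longrightarrow> \<not> E x y"
     "\<And>x y. x \<in> Q5 \<Longrightarrow> y \<in> Q3 \<Longrightarrow> \<not> E x y"
     "\<And>x y. x \<in> Q5 \<Longrightarrow> y \<in> R3 \<Longrightarrow> \<not> E x y"
    using acs unfolding anticomplete_def by blast+
  have A': "\<And>x y. x \<in> Q1 \<Longrightarrow> y \<in> Q3 \<Longrightarrow> \<not> E y x"
     "\<And>x y. x \<in> Q1 \<Longrightarrow> y \<in> R3 \<Longrightarrow> \<not> E y x"
     "\<And>x y. x \<in> Q1 \<Longrightarrow> y \<in> Q4 \<Longrightarrow> \<not> E y x"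
     "\<And>x y. x \<in> Q4 \<Longrightarrow> y \<in> Q2 \<Longrightarrow> \<not> E y x"
     "\<And>x y. x \<in> Q4 \<Longrightarrow> y \<in> R2 \<Longrightarrow> \<not> E y x"
     "\<And>x y. x \<in> Q5 \<Longrightarrow> y \<in> Q2 \<Longrightarrow> \<not> E y x"
     "\<And>x y. x \<in> Q5 \<Longrightarrow> y \<in> R2 \<Longrightarrow> \<not> E y x"
     "\<And>x y. x \<in> Q5 \<Longrightarrow> y \<in> Q3 \<Longrightarrow> \<not> E y x"
     "\<And>x y. x \<in> Q5 \<Longrightarrow> y \<in> R3 \<Longrightarrow> \<not> E y x"
    using A sym by blast+
  have nbs: "\<forall>v\<in>Q2 \<union> R2. \<exists>u\<in>Q3 \<union> R3. E v u" "\<forall>v\<in>Q3 \<union> R3. \<exists>u\<in>Q2 \<union> R2. E v u"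
     "\<forall>v\<in>R2. \<not> (\<forall>u\<in>R2. u \<noteq> v \<longrightarrow> E v u)" "\<forall>v\<in>R3. \<not> (\<forall>u\<in>R3. u \<noteq> v \<longrightarrow> E v u)"
    using B by - (elim conjE, assumption)+
  have nb2: "\<And>v. v \<in> R2 \<Longrightarrow> \<exists>u\<in>Q3 \<union> R3. E v u"
   and nb3: "\<And>v. v \<in> R3 \<Longrightarrow> \<exists>u\<in>Q2 \<union> R2. E v u" using nbs by blast+
  have nc2: "\<And>v. v \<in> R2 \<Longrightarrow> \<exists>u\<in>R2. u \<noteq> v \<and> \<not> E v u"
   and nc3: "\<And>v. v \<in> R3 \<Longrightarrow> \<exists>u\<in>R3. u \<noteq> v \<and> \<not> E v u" using nbs by blast+
  have Vm: "\<And>x. x \<in> Q1 \<Longrightarrow> x \<in> V" "\<And>x. x \<in> Q2 \<Longrightarrow> x \<in> V" "\<And>x. x \<in> Q3 \<Longrightarrow> x \<in> V"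
    "\<And>x. x \<in> Q4 \<Longrightarrow> x \<in> V" "\<And>x. x \<in> Q5 \<Longrightarrow> x \<in> V" "\<And>x. x \<in> R2 \<Longrightarrow> x \<in> V"
    "\<And>x. x \<in> R3 \<Longrightarrow> x \<in> V" using V by blast+
  note Dx = D[THEN disjD]
  note Dx' = Dx[THEN not_sym]
  note facts = q Vm K K' A A' Dx Dx'
  have nsym: "\<And>x y. \<not> E x y \<Longrightarrow> \<not> E y x" using sym by blast

  have A2: False if h: "u \<in> R2" "v \<in> R2" "u \<noteq> v" "\<not> E u v" "w \<in> Q3" "E u w" "E v w" for u v w
    apply (rule noC4[OF c4 sym irr, of u q1 v w])
    by (simp_all add: h facts sym[OF h(6)])
  have A3: False if h: "u \<in> R3" "v \<in> R3" "u \<noteq> v" "\<not> E u v" "w \<in> Q2" "E u w" "E v w" for u v w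
    apply (rule noC4[OF c4 sym irr, of u q4 v w])
    by (simp_all add: h facts sym[OF h(6)])
  have Bp: False if h: "u \<in> R2" "v \<in> R3" "E u v" for u v
  proof -
    obtain u' where u': "u' \<in> R2" "u' \<noteq> u" "\<not> E u u'" using nc2[OF h(1)] by blast
    obtain v' where v': "v' \<in> R3" "v' \<noteq> v" "\<not> E v v'" using nc3[OF h(2)] by blast
    have n1: "\<not> E u' v"
    proof
      assume e: "E u' v"
      show False
        apply (rule noC4[OF c4 sym irr, of u q1 u' v])
        by (simp_all add: h u' not_sym[OF u'(2)] facts e sym[OF h(3)])
    qed
    have n2: "\<not> E v' u"
    proof
      assume e: "E v' u"
      show False
        apply (rule noC4[OF c4 sym irr, of v q4 v' u])
        by (simp_all add: h v' not_sym[OF v'(2)] facts e nsym[OF u'(3)])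
    qed
    show False
    proof (cases "E u' v'")
      case True
      show False
        apply (rule noC6[OF c6 sym irr, of u' q1 u v q4 v'])
        by (simp_all add: h u' v' not_sym[OF u'(2)] not_sym[OF v'(2)] facts n1 n2 nsym[OF n2] nsym[OF u'(3)] sym[OF True])
    next
      case False
      show False
        apply (rule noP6[OF p6 sym irr, of u' q1 u v q4 v'])
        by (simp_all add: h u' v' not_sym[OF u'(2)] not_sym[OF v'(2)] facts n1 n2 nsym[OF n2] nsym[OF u'(3)] False)
    qed
  qed
  have C2: False if h: "v \<in> Q2" "r \<in> R3" "E v r" "q \<in> Q3" "\<not> E v q" for v r q
  proof -
    obtain r' where r': "r' \<in> R3" "r' \<noteq> r" "\<not> E r r'" using nc3[OF h(2)] by blast
    have n: "\<not> E v r'" using A3[of r r' v] h r' sym by blast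
    show False
      apply (rule noP6[OF p6 sym irr, of q5 q1 v r q r'])
      by (simp_all add: h r' not_sym[OF r'(2)] facts n)
  qed
  have C3: False if h: "v \<in> Q3" "r \<in> R2" "E v r" "q \<in> Q2" "\<not> E v q" for v r q
  proof -
    obtain r' where r': "r' \<in> R2" "r' \<noteq> r" "\<not> E r r'" using nc2[OF h(2)] by blast
    have n: "\<not> E v r'" using A2[of r r' v] h r' sym by blast
    show False
      apply (rule noP6[OF p6 sym irr, of q5 q4 v r q r'])
      by (simp_all add: h r' not_sym[OF r'(2)] facts n)
  qed
  have N2: "\<exists>x\<in>Q3. E u x" if "u \<in> R2" for u using nb2[OF that] Bp[OF that] by blast
  have N3: "\<exists>x\<in>Q2. E u x" if "u \<in> R3" for u using nb3[OF that] Bp[OF _ that] sym by blast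

  have P42: "P_free 4 R2 E"
  proof (rule ccontr)
    assume "\<not> P_free 4 R2 E"
    then obtain a b c d where p: "a \<in> R2" "b \<in> R2" "c \<in> R2" "d \<in> R2" "distinct [a,b,c,d]"
      "E a b" "E b c" "E c d" "\<not> E a c" "\<not> E a d" "\<not> E b d" by (rule getP4)
    have dd: "a \<noteq> b" "b \<noteq> a" "a \<noteq> c" "c \<noteq> a" "a \<noteq> d" "d \<noteq> a" "b \<noteq> c" "c \<noteq> b" "b \<noteq> d" "d \<noteq> b" "c \<noteq> d" "d \<noteq> c" using p(5) by auto
    obtain x where x: "x \<in> Q3" "E d x" using N2[OF p(4)] by blast
    obtain y where y: "y \<in> Q3" "E a y" using N2[OF p(1)] by blast
    have xa: "\<not> E a x" using A2[of a d x] p x by auto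
    have xb: "\<not> E b x" using A2[of b d x] p x by auto
    have yc: "\<not> E c y" using A2[of a c y] p y by auto
    have yd: "\<not> E d y" using A2[of a d y] p y by auto
    have xy: "x \<noteq> y" "E x y" using x y yd cl3 by auto
    show False
    proof (cases "E c x")
      case cx: True
      show False
      proof (cases "E b y")
        case True
        show False
          apply (rule noC4[OF c4 sym irr, of y b c x])
          by (simp_all add: dd p x y xa xb yc yd xy not_sym[OF xy(1)] cx True facts nsym[OF yc] sym[OF xy(2)] sym[OF True])
      next
        case False
        show False
          apply (rule noP6[OF p6 sym irr, of d c b a y q4])
          by (simp_all add: dd p x y xa xb yc yd xy not_sym[OF xy(1)] False facts nsym[OF p(9)] nsym[OF p(10)] nsym[OF p(11)]
            sym[OF p(6)] sym[OF p(7)] sym[OF p(8)] nsym[OF yd])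
      qed
    next
      case False
      show False
        apply (rule noP6[OF p6 sym irr, of a b c d x q4])
        by (simp_all add: dd p x y xa xb yc yd xy not_sym[OF xy(1)] False facts)
    qed
  qed
  have P43: "P_free 4 R3 E"
  proof (rule ccontr)
    assume "\<not> P_free 4 R3 E"
    then obtain a b c d where p: "a \<in> R3" "b \<in> R3" "c \<in> R3" "d \<in> R3" "distinct [a,b,c,d]"
      "E a b" "E b c" "E c d" "\<not> E a c" "\<not> E a d" "\<not> E b d" by (rule getP4)
    have dd: "a \<noteq> b" "b \<noteq> a" "a \<noteq> c" "c \<noteq> a" "a \<noteq> d" "d \<noteq> a" "b \<noteq> c" "c \<noteq> b" "b \<noteq> d" "d \<noteq> b" "c \<noteq> d" "d \<noteq> c" using p(5) by auto
    obtain x where x: "x \<in> Q2" "E d x" using N3[OF p(4)] by blast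
    obtain y where y: "y \<in> Q2" "E a y" using N3[OF p(1)] by blast
    have xa: "\<not> E a x" using A3[of a d x] p x by auto
    have xb: "\<not> E b x" using A3[of b d x] p x by auto
    have yc: "\<not> E c y" using A3[of a c y] p y by auto
    have yd: "\<not> E d y" using A3[of a d y] p y by auto
    have xy: "x \<noteq> y" "E x y" using x y yd cl2 by auto
    show False
    proof (cases "E c x")
      case cx: True
      show False
      proof (cases "E b y")
        case True
        show False
          apply (rule noC4[OF c4 sym irr, of y b c x])
          by (simp_all add: dd p x y xa xb yc yd xy not_sym[OF xy(1)] cx True facts nsym[OF yc] sym[OF xy(2)] sym[OF True])
      next
        case False
        show False
          apply (rule noP6[OF p6 sym irr, of d c b a y q1])
          by (simp_all add: dd p x y xa xb yc yd xy not_sym[OF xy(1)] False facts nsym[OF p(9)] nsym[OF p(10)] nsym[OF p(11)]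
            sym[OF p(6)] sym[OF p(7)] sym[OF p(8)] nsym[OF yd])
      qed
    next
      case False
      show False
        apply (rule noP6[OF p6 sym irr, of a b c d x q1])
        by (simp_all add: dd p x y xa xb yc yd xy not_sym[OF xy(1)] False facts)
    qed
  qed
  have T2: "twoP3_free R2 E"
  proof (rule ccontr)
    assume "\<not> twoP3_free R2 E"
    then obtain a b c d e g where p: "a \<in> R2" "b \<in> R2" "c \<in> R2" "d \<in> R2" "e \<in> R2" "g \<in> R2"
      "distinct [a,b,c,d,e,g]"
      "E a b" "E b c" "E d e" "E e g" "\<not> E a c" "\<not> E d g"
      "\<not> E a d" "\<not> E a e" "\<not> E a g" "\<not> E b d" "\<not> E b e" "\<not> E b g"
      "\<not> E c d" "\<not> E c e" "\<not> E c g" by (rule get2P3)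
    have dd: "a \<noteq> b" "b \<noteq> a" "a \<noteq> c" "c \<noteq> a" "a \<noteq> d" "d \<noteq> a" "a \<noteq> e" "e \<noteq> a" "a \<noteq> g" "g \<noteq> a" "b \<noteq> c" "c \<noteq> b" "b \<noteq> d" "d \<noteq> b" "b \<noteq> e" "e \<noteq> b" "b \<noteq> g" "g \<noteq> b" "c \<noteq> d" "d \<noteq> c" "c \<noteq> e" "e \<noteq> c" "c \<noteq> g" "g \<noteq> c" "d \<noteq> e" "e \<noteq> d" "d \<noteq> g" "g \<noteq> d" "e \<noteq> g" "g \<noteq> e" using p(7) by auto
    obtain x where x: "x \<in> Q3" "E a x" using N2[OF p(1)] by blast
    obtain y where y: "y \<in> Q3" "E d y" using N2[OF p(4)] by blast
    have xn: "\<not> E c x" "\<not> E d x" "\<not> E e x" "\<not> E g x"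
      using A2[of a c x] A2[of a d x] A2[of a e x] A2[of a g x] p x by auto
    have yn: "\<not> E a y" "\<not> E b y" "\<not> E c y" "\<not> E g y"
      using A2[of a d y] A2[of b d y] A2[of c d y] A2[of d g y] p y nsym by auto
    have xy: "x \<noteq> y" "E x y" using x y yn cl3 by auto
    note all = dd p x y xn yn xy not_sym[OF xy(1)] facts sym[OF xy(2)] sym[OF p(8)] sym[OF p(9)] sym[OF p(10)] sym[OF p(11)]
      nsym[OF p(12)] nsym[OF p(13)] nsym[OF p(14)] nsym[OF p(15)] nsym[OF p(16)] nsym[OF p(17)]
      nsym[OF p(18)] nsym[OF p(19)] nsym[OF p(20)] nsym[OF p(21)] nsym[OF p(22)]
      nsym[OF xn(1)] nsym[OF xn(2)] nsym[OF xn(3)] nsym[OF xn(4)]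
      nsym[OF yn(1)] nsym[OF yn(2)] nsym[OF yn(3)] nsym[OF yn(4)] sym[OF x(2)] sym[OF y(2)]
    show False
    proof (cases "E b x")
      case False
      show False
        apply (rule noP6[OF p6 sym irr, of c b a x y d])
        by (simp_all add: all False)
    next
      case bx: True
      show False
      proof (cases "E e y")
        case False
        show False
          apply (rule noP6[OF p6 sym irr, of g e d y x a])
          by (simp_all add: all False)
      next
        case True
        show False
          apply (rule noP6[OF p6 sym irr, of c b x y e g])
          by (simp_all add: all True bx sym[OF True])
      qed
    qed
  qed
  have T3: "twoP3_free R3 E"
  proof (rule ccontr)
    assume "\<not> twoP3_free R3 E"
    then obtain a b c d e g where p: "a \<in> R3" "b \<in> R3" "c \<in> R3" "d \<in> R3" "e \<in> R3" "g \<in> R3"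
      "distinct [a,b,c,d,e,g]"
      "E a b" "E b c" "E d e" "E e g" "\<not> E a c" "\<not> E d g"
      "\<not> E a d" "\<not> E a e" "\<not> E a g" "\<not> E b d" "\<not> E b e" "\<not> E b g"
      "\<not> E c d" "\<not> E c e" "\<not> E c g" by (rule get2P3)
    have dd: "a \<noteq> b" "b \<noteq> a" "a \<noteq> c" "c \<noteq> a" "a \<noteq> d" "d \<noteq> a" "a \<noteq> e" "e \<noteq> a" "a \<noteq> g" "g \<noteq> a" "b \<noteq> c" "c \<noteq> b" "b \<noteq> d" "d \<noteq> b" "b \<noteq> e" "e \<noteq> b" "b \<noteq> g" "g \<noteq> b" "c \<noteq> d" "d \<noteq> c" "c \<noteq> e" "e \<noteq> c" "c \<noteq> g" "g \<noteq> c" "d \<noteq> e" "e \<noteq> d" "d \<noteq> g" "g \<noteq> d" "e \<noteq> g" "g \<noteq> e" using p(7) by auto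
    obtain x where x: "x \<in> Q2" "E a x" using N3[OF p(1)] by blast
    obtain y where y: "y \<in> Q2" "E d y" using N3[OF p(4)] by blast
    have xn: "\<not> E c x" "\<not> E d x" "\<not> E e x" "\<not> E g x"
      using A3[of a c x] A3[of a d x] A3[of a e x] A3[of a g x] p x by auto
    have yn: "\<not> E a y" "\<not> E b y" "\<not> E c y" "\<not> E g y"
      using A3[of a d y] A3[of b d y] A3[of c d y] A3[of d g y] p y nsym by auto
    have xy: "x \<noteq> y" "E x y" using x y yn cl2 by auto
    note all = dd p x y xn yn xy not_sym[OF xy(1)] facts sym[OF xy(2)] sym[OF p(8)] sym[OF p(9)] sym[OF p(10)] sym[OF p(11)]
      nsym[OF p(12)] nsym[OF p(13)] nsym[OF p(14)] nsym[OF p(15)] nsym[OF p(16)] nsym[OF p(17)]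
      nsym[OF p(18)] nsym[OF p(19)] nsym[OF p(20)] nsym[OF p(21)] nsym[OF p(22)]
      nsym[OF xn(1)] nsym[OF xn(2)] nsym[OF xn(3)] nsym[OF xn(4)]
      nsym[OF yn(1)] nsym[OF yn(2)] nsym[OF yn(3)] nsym[OF yn(4)] sym[OF x(2)] sym[OF y(2)]
    show False
    proof (cases "E b x")
      case False
      show False
        apply (rule noP6[OF p6 sym irr, of c b a x y d])
        by (simp_all add: all False)
    next
      case bx: True
      show False
      proof (cases "E e y")
        case False
        show False
          apply (rule noP6[OF p6 sym irr, of g e d y x a])
          by (simp_all add: all False)
      next
        case True
        show False
          apply (rule noP6[OF p6 sym irr, of c b x y e g])
          by (simp_all add: all True bx sym[OF True])
      qed
    qed
  qed
  show ?thesis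
    using A2 A3 Bp C2 C3 P42 P43 T2 T3 sym by meson
qed

end
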